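(* Let $B$ be a compact metric space admitting a continuous minimal map, let $\Gamma$ be a graph containing a circle $C$, and let $E=B\times\Gamma$. Then there exist continuous maps $F:E\to E$ and $f:B\to B$ with $\mathrm{pr}_1\circ F=f\circ\mathrm{pr}_1$ (i.e., $F$ is fibre-preserving) such that $B\times C$ is a minimal set of $F$.
   Context: A graph is a nonempty compact metric space that is a union of finitely many arcs pairwise disjoint or meeting only at end-points; a circle is a simple closed curve. A continuous selfmap is minimal if it has no proper nonempty closed invariant subset (equivalently all forward orbits are dense); a minimal set of $F$ is a nonempty closed $F$-invariant set on which $F$ is minimal. *)

theory Defs
  imports "HOL-Analysis.Analysis"
begin

definition is_graph :: "'a::metric_space set \<Rightarrow> bool" where
  "is_graph G \<longleftrightarrow> G \<noteq> {} \<and>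
     (\<exists>A :: (real \<Rightarrow> 'a) set. finite A \<and> (\<forall>g\<in>A. arc g) \<and>
        G = (\<Union>g\<in>A. path_image g) \<and>
        (\<forall>g\<in>A. \<forall>h\<in>A. g \<noteq> h \<longrightarrow>
           path_image g \<inter> path_image h \<subseteq>
             {pathstart g, pathfinish g} \<inter> {pathstart h, pathfinish h}))"

definition is_circle :: "'a::topological_space set \<Rightarrow> bool" where
  "is_circle C \<longleftrightarrow> (\<exists>g. simple_path g \<and> pathfinish g = pathstart g \<and> path_image g = C)"

definition minimal_map :: "'a::topological_space set \<Rightarrow> ('a \<Rightarrow> 'a) \<Rightarrow> bool" where
  "minimal_map S f \<longleftrightarrow> f ` S \<subseteq> S \<and>
     (\<forall>A. A \<subseteq> S \<and> A \<noteq> {} \<and> closedin (top_of_set S) A \<and> f ` A \<subseteq> A \<longrightarrow> A = S)"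

definition minimal_set :: "('a::topological_space \<Rightarrow> 'a) \<Rightarrow> 'a set \<Rightarrow> bool" where
  "minimal_set F M \<longleftrightarrow> M \<noteq> {} \<and> closed M \<and> F ` M \<subseteq> M \<and> minimal_map M F"

end

theory Submission
  imports Defs
begin


lemma key_ineq:
  fixes x y a b :: real
  assumes "x^2 + y^2 = 1" "a^2 + b^2 = 1" "x > 0" "a*x - b*y > 0" "b > 0"
  shows "a*y + b*x > y"
proof -
  have "a^2 \<le> 1" using assms(2) zero_le_power2[of b] by linarith
  then have aa: "\<bar>a\<bar> \<le> 1" by (simp add: abs_square_le_1)
  show ?thesis
  proof (cases "y \<le> 0")
    case True
    have "(1-a)*y \<le> 0" using True aa by (simp add: mult_nonneg_nonpos)
    moreover have "b*x > 0" using assms by simp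
    ultimately show ?thesis by (simp add: algebra_simps)
  next
    case False
    have "a \<noteq> -1" using assms(2,5) by auto
    with aa have a1: "1 + a > 0" by linarith
    have "(1+a)*x = x + a*x" by (simp add: algebra_simps)
    then have "(1+a)*x > b*y" using assms(3,4) by linarith
    then have "b*((1+a)*x) > b*(b*y)" using assms(5) by simp
    moreover have "b*b = (1-a)*(1+a)" using assms(2) by (simp add: power2_eq_square algebra_simps)
    then have "b*(b*y) = (1+a)*((1-a)*y)" by (metis mult.assoc mult.commute)
    moreover have "b*((1+a)*x) = (1+a)*(b*x)" by (simp add: algebra_simps)
    ultimately have "(1+a)*(b*x) > (1+a)*((1-a)*y)" by linarith
    then have "b*x > (1-a)*y" using a1 by simp
    then show ?thesis by (simp add: algebra_simps)
  qed
qed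

definition eig :: "'a::metric_space set \<Rightarrow> ('a \<Rightarrow> 'a) \<Rightarrow> complex \<Rightarrow> bool" where
  "eig B g \<beta> \<longleftrightarrow> (\<exists>\<psi>. continuous_on B \<psi> \<and> \<psi> ` B \<subseteq> sphere 0 1 \<and> (\<forall>x\<in>B. \<psi> (g x) = \<beta> * \<psi> x))"

lemma im_increase:
  fixes r d :: complex
  assumes "cmod r = 1" "cmod d = 1" "Re r > 0" "Re (d*r) > 0" "Im d > 0"
  shows "Im (d*r) > Im r"
proof -
  have "(Re r)^2 + (Im r)^2 = 1" using assms(1) by (metis cmod_power2 one_power2)
  moreover have "(Re d)^2 + (Im d)^2 = 1" using assms(2) by (metis cmod_power2 one_power2)
  moreover have "Re d * Re r - Im d * Im r > 0" using assms(4) by simp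
  ultimately have "Re d * Im r + Im d * Re r > Im r"
    using key_ineq assms(3,5) by blast
  then show ?thesis by (simp add: algebra_simps)
qed

lemma eig_sep:
  fixes B :: "'a::metric_space set"
  assumes B: "compact B" "B \<noteq> {}" and gB: "g ` B = B"
    and c1: "continuous_on B \<psi>1" "\<psi>1 ` B \<subseteq> sphere 0 1" "\<forall>x\<in>B. \<psi>1 (g x) = \<beta>1 * \<psi>1 x"
    and c2: "continuous_on B \<psi>2" "\<psi>2 ` B \<subseteq> sphere 0 1" "\<forall>x\<in>B. \<psi>2 (g x) = \<beta>2 * \<psi>2 x"
    and close: "\<forall>x\<in>B. cmod (\<psi>1 x - \<psi>2 x) < 1/2"
  shows "\<beta>1 = \<beta>2"
proof -
  obtain x0 where x0: "x0 \<in> B" using B by blast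
  have gx0: "g x0 \<in> B" using gB x0 by blast
  have n1: "cmod \<beta>1 = 1"
  proof -
    have "cmod (\<psi>1 (g x0)) = 1" "cmod (\<psi>1 x0) = 1" using c1(2) x0 gx0 by auto
    then show ?thesis using c1(3) x0 by (simp add: norm_mult)
  qed
  have n2: "cmod \<beta>2 = 1"
  proof -
    have "cmod (\<psi>2 (g x0)) = 1" "cmod (\<psi>2 x0) = 1" using c2(2) x0 gx0 by auto
    then show ?thesis using c2(3) x0 by (simp add: norm_mult)
  qed
  define chi where "chi x = \<psi>1 x * cnj (\<psi>2 x)" for x
  define \<delta> where "\<delta> = \<beta>1 * cnj \<beta>2"
  have nd: "cmod \<delta> = 1" using n1 n2 by (simp add: \<delta>_def norm_mult)
  have chig: "chi (g x) = \<delta> * chi x" if "x \<in> B" for x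
    using c1(3) c2(3) that by (simp add: chi_def \<delta>_def)
  have chin: "cmod (chi x) = 1" if "x \<in> B" for x
    using c1(2) c2(2) that by (auto simp: chi_def norm_mult image_subset_iff)
  have chi1: "cmod (chi x - 1) < 1/2" if "x \<in> B" for x
  proof -
    have "cmod (\<psi>2 x) = 1" using c2(2) that by auto
    then have "\<psi>2 x * cnj (\<psi>2 x) = 1"
      by (metis complex_norm_square mult.commute of_real_1 power_one)
    then have "chi x - 1 = (\<psi>1 x - \<psi>2 x) * cnj (\<psi>2 x)" by (simp add: chi_def algebra_simps)
    then have "cmod (chi x - 1) = cmod (\<psi>1 x - \<psi>2 x)" using \<open>cmod (\<psi>2 x) = 1\<close> by (simp add: norm_mult)
    then show ?thesis using close that by simp
  qed
  define R where "R = chi ` B"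
  have contchi: "continuous_on B chi" unfolding chi_def using c1(1) c2(1) by (intro continuous_intros)
  have cR: "compact R" unfolding R_def using contchi B(1) by (rule compact_continuous_image)
  have Rre: "Re w > 1/2" "cmod w = 1" if wR: "w \<in> R" for w
  proof -
    obtain x where x: "x \<in> B" "w = chi x" using wR R_def by blast
    have "Re (1 - w) \<le> cmod (1 - w)" by (rule complex_Re_le_cmod)
    also have "\<dots> < 1/2" using chi1 x by (simp add: norm_minus_commute)
    finally show "Re w > 1/2" by simp
    show "cmod w = 1" using chin x by simp
  qed
  have Rd: "\<delta> * w \<in> R" if wR: "w \<in> R" for w
  proof -
    obtain x where x: "x \<in> B" "w = chi x" using wR R_def by blast
    have "g x \<in> B" using gB x by blast
    then show ?thesis using chig x unfolding R_def by (metis image_eqI)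
  qed
  have Rdi: "\<exists>w'\<in>R. w = \<delta> * w'" if wR: "w \<in> R" for w
  proof -
    obtain x where x: "x \<in> B" "w = chi x" using wR R_def by blast
    obtain y where y: "y \<in> B" "x = g y" using gB x by blast
    show ?thesis using chig y x unfolding R_def by blast
  qed
  have "R \<noteq> {}" using B R_def by simp
  then obtain r where r: "r \<in> R" "\<And>w. w \<in> R \<Longrightarrow> Im w \<le> Im r"
    using continuous_attains_sup[OF cR, of Im] continuous_on_Im[OF continuous_on_id] by blast
  have "\<delta> = 1"
  proof (rule ccontr)
    assume "\<delta> \<noteq> 1"
    consider "Im \<delta> > 0" | "Im \<delta> < 0" | "Im \<delta> = 0" by linarith
    then show False
    proof cases
      case 1
      have "\<delta>*r \<in> R" using Rd r(1) .
      have "Im (\<delta>*r) > Im r"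
      proof (rule im_increase)
        show "cmod r = 1" "Re r > 0" using Rre[OF r(1)] by auto
        show "Re (\<delta>*r) > 0" using Rre[OF \<open>\<delta>*r \<in> R\<close>] by auto
      qed (use nd 1 in auto)
      then show False using r Rd by fastforce
    next
      case 2
      obtain w' where w': "w' \<in> R" "r = \<delta> * w'" using Rdi r(1) by blast
      have "cnj \<delta> * \<delta> = 1" using nd by (metis complex_norm_square mult.commute of_real_1 power_one)
      then have "w' = cnj \<delta> * r" using w' by (simp add: mult.assoc[symmetric])
      have "Im (cnj \<delta> * r) > Im r"
      proof (rule im_increase)
        show "cmod r = 1" "Re r > 0" using Rre[OF r(1)] by auto
        show "Re (cnj \<delta>*r) > 0" using Rre[OF w'(1)] \<open>w' = cnj \<delta> * r\<close> by auto
      qed (use nd 2 in auto)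
      then show False using r w' \<open>w' = cnj \<delta> * r\<close> by fastforce
    next
      case 3
      then have "\<delta> = complex_of_real (Re \<delta>)" by (simp add: complex_eq_iff)
      then have "\<bar>Re \<delta>\<bar> = 1" using nd by (metis norm_of_real)
      with \<open>\<delta> \<noteq> 1\<close> 3 have "\<delta> = -1" by (simp add: complex_eq_iff abs_if split: if_splits)
      then have "- r \<in> R" using Rd r(1) by fastforce
      then have "Re (-r) > 1/2" by (rule Rre)
      moreover have "Re r > 1/2" using r(1) by (rule Rre)
      ultimately show False by simp
    qed
  qed
  then have "\<beta>1 * cnj \<beta>2 * \<beta>2 = \<beta>2" by (simp add: \<delta>_def)
  moreover have "cnj \<beta>2 * \<beta>2 = 1" using n2 by (metis complex_norm_square mult.commute of_real_1 power_one)
  ultimately show ?thesis by (simp add: mult.assoc)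
qed

lemma floor_eq_close:
  fixes a b :: real
  assumes "\<lfloor>16*a\<rfloor> = \<lfloor>16*b\<rfloor>"
  shows "\<bar>a - b\<bar> < 1/16"
proof -
  have "16*a - 1 < \<lfloor>16*a\<rfloor>" "\<lfloor>16*a\<rfloor> \<le> 16*a" by linarith+
  moreover have "16*b - 1 < \<lfloor>16*b\<rfloor>" "\<lfloor>16*b\<rfloor> \<le> 16*b" by linarith+
  ultimately show ?thesis using assms by linarith
qed

lemma eig_countable:
  fixes B :: "'a::metric_space set"
  assumes B: "compact B" "B \<noteq> {}" and gB: "g ` B = B"
  shows "countable {\<beta>. eig B g \<beta>}"
proof -
  define E where "E = {\<beta>. eig B g \<beta>}"
  define \<psi> where "\<psi> \<beta> = (SOME f. continuous_on B f \<and> f ` B \<subseteq> sphere 0 1 \<and> (\<forall>x\<in>B. f (g x) = \<beta> * f x))" for \<beta> :: complex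
  have psi: "continuous_on B (\<psi> \<beta>) \<and> \<psi> \<beta> ` B \<subseteq> sphere 0 1 \<and> (\<forall>x\<in>B. \<psi> \<beta> (g x) = \<beta> * \<psi> \<beta> x)"
    if "\<beta> \<in> E" for \<beta>
  proof -
    have "\<exists>f. continuous_on B f \<and> f ` B \<subseteq> sphere 0 1 \<and> (\<forall>x\<in>B. f (g x) = \<beta> * f x)"
      using that unfolding E_def eig_def by simp
    then show ?thesis unfolding \<psi>_def by (rule someI_ex)
  qed
  have "\<exists>N. finite N \<and> N \<subseteq> B \<and> B \<subseteq> (\<Union>y\<in>N. ball y (1 / Suc m))" for m :: nat
  proof -
    have cov: "B \<subseteq> (\<Union>y\<in>B. ball y (1 / Suc m))" by auto
    obtain C' where "C' \<subseteq> B" "finite C'" "B \<subseteq> (\<Union>y\<in>C'. ball y (1 / Suc m))"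
    proof (rule compactE_image[OF B(1), of B "\<lambda>y. ball y (1 / Suc m)"])
      show "open (ball T (1 / Suc m))" for T by simp
      show "B \<subseteq> (\<Union>y\<in>B. ball y (1 / Suc m))" by (rule cov)
    qed
    then show ?thesis by blast
  qed
  then have "\<forall>m. \<exists>N. finite N \<and> N \<subseteq> B \<and> B \<subseteq> (\<Union>y\<in>N. ball y (1 / Suc m))" by blast
  from choice[OF this] obtain N where N0: "\<forall>m. finite (N m) \<and> N m \<subseteq> B \<and> B \<subseteq> (\<Union>y\<in>N m. ball y (1 / Suc m))"
    by blast
  then have N: "\<And>m. finite (N m)" "\<And>m. N m \<subseteq> B" "\<And>m. B \<subseteq> (\<Union>y\<in>N m. ball y (1 / Suc m))"
    by auto
  define L where "L m = (SOME xs. set xs = N m)" for m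
  have L: "set (L m) = N m" for m unfolding L_def by (rule someI_ex[OF finite_list[OF N(1)]])
  define P where "P \<beta> m \<longleftrightarrow> (\<forall>x\<in>B. \<forall>y\<in>B. dist x y < 1 / Suc m \<longrightarrow> cmod (\<psi> \<beta> x - \<psi> \<beta> y) < 1/8)" for \<beta> m
  define mm where "mm \<beta> = (LEAST m. P \<beta> m)" for \<beta>
  have Pm: "P \<beta> (mm \<beta>)" if "\<beta> \<in> E" for \<beta>
  proof -
    have "uniformly_continuous_on B (\<psi> \<beta>)"
      using psi[OF that] B(1) compact_uniformly_continuous by blast
    then obtain d where d: "d > 0" "\<And>x y. x \<in> B \<Longrightarrow> y \<in> B \<Longrightarrow> dist y x < d \<Longrightarrow> dist (\<psi> \<beta> y) (\<psi> \<beta> x) < 1/8"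
      by (rule uniformly_continuous_onE[where \<epsilon>="1/8"]) auto
    obtain m :: nat where m: "1 / real (Suc m) < d" using nat_approx_posE[OF d(1)] by blast
    have "P \<beta> m" unfolding P_def
    proof (intro ballI impI)
      fix x y assume "x \<in> B" "y \<in> B" "dist x y < 1 / Suc m"
      then have "dist x y < d" using m by linarith
      then show "cmod (\<psi> \<beta> x - \<psi> \<beta> y) < 1/8" using d(2)[of y x] \<open>x \<in> B\<close> \<open>y \<in> B\<close> by (simp add: dist_norm)
    qed
    then show ?thesis unfolding mm_def by (rule LeastI)
  qed
  define rnd where "rnd z = (\<lfloor>16 * Re z\<rfloor>, \<lfloor>16 * Im z\<rfloor>)" for z :: complex
  define code where "code \<beta> = (mm \<beta>, map (\<lambda>y. rnd (\<psi> \<beta> y)) (L (mm \<beta>)))" for \<beta>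
  have "inj_on code E"
  proof (rule inj_onI)
    fix \<beta>1 \<beta>2 assume b1: "\<beta>1 \<in> E" and b2: "\<beta>2 \<in> E" and eq: "code \<beta>1 = code \<beta>2"
    define m where "m = mm \<beta>1"
    have m2: "mm \<beta>2 = m" using eq unfolding code_def m_def by simp
    have mapeq: "map (\<lambda>y. rnd (\<psi> \<beta>1 y)) (L m) = map (\<lambda>y. rnd (\<psi> \<beta>2 y)) (L m)"
      using eq m2 unfolding code_def m_def by simp
    have near: "cmod (\<psi> \<beta>1 y - \<psi> \<beta>2 y) < 1/8" if "y \<in> N m" for y
    proof -
      have "rnd (\<psi> \<beta>1 y) = rnd (\<psi> \<beta>2 y)" using mapeq that L unfolding map_eq_conv by blast
      then have "\<bar>Re (\<psi> \<beta>1 y) - Re (\<psi> \<beta>2 y)\<bar> < 1/16" "\<bar>Im (\<psi> \<beta>1 y) - Im (\<psi> \<beta>2 y)\<bar> < 1/16"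
        unfolding rnd_def using floor_eq_close by auto
      moreover have "cmod (\<psi> \<beta>1 y - \<psi> \<beta>2 y) \<le> \<bar>Re (\<psi> \<beta>1 y - \<psi> \<beta>2 y)\<bar> + \<bar>Im (\<psi> \<beta>1 y - \<psi> \<beta>2 y)\<bar>"
        by (rule cmod_le)
      ultimately show ?thesis by simp
    qed
    have P1: "P \<beta>1 m" using Pm[OF b1] m_def by simp
    have P2: "P \<beta>2 m" using Pm[OF b2] m2 by simp
    show "\<beta>1 = \<beta>2"
    proof (rule eig_sep[OF B gB])
      show "continuous_on B (\<psi> \<beta>1)" "\<psi> \<beta>1 ` B \<subseteq> sphere 0 1" "\<forall>x\<in>B. \<psi> \<beta>1 (g x) = \<beta>1 * \<psi> \<beta>1 x"
        using psi[OF b1] by auto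
      show "continuous_on B (\<psi> \<beta>2)" "\<psi> \<beta>2 ` B \<subseteq> sphere 0 1" "\<forall>x\<in>B. \<psi> \<beta>2 (g x) = \<beta>2 * \<psi> \<beta>2 x"
        using psi[OF b2] by auto
      show "\<forall>x\<in>B. cmod (\<psi> \<beta>1 x - \<psi> \<beta>2 x) < 1/2"
      proof
        fix x assume x: "x \<in> B"
        then obtain y where y: "y \<in> N m" "dist y x < 1 / Suc m" using N(3)[of m] by auto
        have yB: "y \<in> B" using y N(2) by auto
        have a: "cmod (\<psi> \<beta>1 x - \<psi> \<beta>1 y) < 1/8" using P1 x yB y(2) unfolding P_def by (simp add: dist_commute)
        have b: "cmod (\<psi> \<beta>2 y - \<psi> \<beta>2 x) < 1/8" using P2 x yB y(2) unfolding P_def by simp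
        have c: "cmod (\<psi> \<beta>1 y - \<psi> \<beta>2 y) < 1/8" using near y(1) .
        have "cmod (\<psi> \<beta>1 x - \<psi> \<beta>2 x) \<le> cmod (\<psi> \<beta>1 x - \<psi> \<beta>1 y) + cmod (\<psi> \<beta>1 y - \<psi> \<beta>2 y) + cmod (\<psi> \<beta>2 y - \<psi> \<beta>2 x)"
        proof -
          have e: "\<psi> \<beta>1 x - \<psi> \<beta>2 x = ((\<psi> \<beta>1 x - \<psi> \<beta>1 y) + (\<psi> \<beta>1 y - \<psi> \<beta>2 y)) + (\<psi> \<beta>2 y - \<psi> \<beta>2 x)" by simp
          show ?thesis unfolding e
            using norm_triangle_ineq[of "(\<psi> \<beta>1 x - \<psi> \<beta>1 y) + (\<psi> \<beta>1 y - \<psi> \<beta>2 y)" "\<psi> \<beta>2 y - \<psi> \<beta>2 x"]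
              norm_triangle_ineq[of "\<psi> \<beta>1 x - \<psi> \<beta>1 y" "\<psi> \<beta>1 y - \<psi> \<beta>2 y"] by linarith
        qed
        with a b c show "cmod (\<psi> \<beta>1 x - \<psi> \<beta>2 x) < 1/2" by linarith
      qed
    qed
  qed
  moreover have "countable (code ` E)" by (rule countableI_type)
  ultimately show ?thesis unfolding E_def[symmetric] by (metis countable_image_inj_on)
qed

lemma finite_nth_roots:
  fixes \<beta> :: complex
  assumes "1 \<le> n"
  shows "finite {z. z^n = \<beta>}"
proof -
  have "finite {z::complex. (\<Sum>i\<le>n. (if i = 0 then -\<beta> else if i=n then 1 else 0) * z^i) = 0}"
    by (rule polyfun_rootbound_finite) (use assms in \<open>auto intro!: exI[of _ n]\<close>)
  then show ?thesis by (simp add: root_polyfun [OF assms])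
qed

lemma good_lambda:
  assumes "countable E"
  shows "\<exists>lam\<in>sphere (0::complex) 1. \<forall>n\<ge>1. lam^n \<notin> E"
proof -
  define Bad where "Bad = (\<Union>n\<in>{1..}. \<Union>\<beta>\<in>E. {z::complex. z^n = \<beta>})"
  have "countable Bad" unfolding Bad_def
  proof (intro countable_UN)
    fix n \<beta> assume "n \<in> {1::nat..}" "\<beta> \<in> E"
    then show "countable {z::complex. z^n = \<beta>}" using countable_finite finite_nth_roots by auto
  qed (use assms in auto)
  moreover have "uncountable (sphere (0::complex) 1)"
    by (rule connected_uncountable[of _ 1 "-1"]) (auto intro: connected_sphere)
  ultimately have "\<not> sphere (0::complex) 1 \<subseteq> Bad" using countable_subset by blast
  then obtain lam where "lam \<in> sphere 0 1" "lam \<notin> Bad" by blast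
  then show ?thesis unfolding Bad_def by auto
qed




lemma finite_chain_min:
  assumes "finite F" "F \<noteq> {}" "\<forall>X\<in>F. \<forall>Y\<in>F. X \<subseteq> Y \<or> Y \<subseteq> X"
  shows "\<exists>X\<in>F. \<forall>Y\<in>F. X \<subseteq> Y"
  using assms
proof (induction F rule: finite_ne_induct)
  case (singleton x)
  then show ?case by auto
next
  case (insert x F)
  then obtain X where X: "X \<in> F" "\<forall>Y\<in>F. X \<subseteq> Y" by auto
  have "x \<subseteq> X \<or> X \<subseteq> x" using insert.prems X(1) by auto
  then show ?case
  proof
    assume "x \<subseteq> X" then show ?thesis using X by auto
  next
    assume "X \<subseteq> x" then show ?thesis using X by auto
  qed
qed

lemma norm_one_minus_cis_sq: "(cmod (1 - cis s))^2 = 2 - 2 * cos s"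
proof -
  have "(cmod (1 - cis s))^2 = (Re (1 - cis s))^2 + (Im (1 - cis s))^2" by (rule cmod_power2)
  also have "\<dots> = (1 - cos s)^2 + (sin s)^2" by simp
  also have "\<dots> = 1 - 2 * cos s + ((sin s)^2 + (cos s)^2)" by (simp add: power2_diff)
  also have "\<dots> = 2 - 2 * cos s" using sin_cos_squared_add[of s] by linarith
  finally show ?thesis .
qed

lemma cis_close:
  assumes "0 \<le> s" "s \<le> t" "t \<le> pi"
  shows "cmod (1 - cis s) \<le> cmod (1 - cis t)"
proof -
  have "cos t \<le> cos s" using assms by (intro cos_monotone_0_pi_le) auto
  then have "(cmod (1 - cis s))^2 \<le> (cmod (1 - cis t))^2" by (simp add: norm_one_minus_cis_sq)
  then show ?thesis by (rule power2_le_imp_le) simp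
qed

lemma unit_cnj: "cmod z = 1 \<Longrightarrow> cnj z * z = 1"
  by (metis complex_norm_square mult.commute of_real_1 power_one)

lemma powers_dense:
  fixes nu w :: complex and e :: real
  assumes nu: "nu = cis t" "0 < t" "t \<le> pi" and e: "cmod (nu - 1) < e" and w: "cmod w = 1"
  shows "\<exists>k::nat. cmod (nu^k - w) < e"
proof -
  have w0: "w \<noteq> 0" using w by auto
  have "cis (Arg w) = w" using cis_Arg[OF w0] w by (simp add: sgn_div_norm)
  define \<phi> where "\<phi> = Arg w + 2*pi"
  have "cis \<phi> = cis (Arg w) * cis (2*pi)" unfolding \<phi>_def cis_mult by simp
  then have wphi: "w = cis \<phi>" using \<open>cis (Arg w) = w\<close> by simp
  have phipos: "\<phi> > 0" unfolding \<phi>_def using Arg_bounded[of w] by linarith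
  define k where "k = nat \<lfloor>\<phi>/t\<rfloor>"
  have fl0: "\<lfloor>\<phi>/t\<rfloor> \<ge> 0" using phipos nu(2) by simp
  have kr: "real k = of_int \<lfloor>\<phi>/t\<rfloor>" unfolding k_def using fl0 by simp
  have "real k \<le> \<phi>/t" "\<phi>/t < real k + 1" unfolding kr by linarith+
  then have k1: "real k * t \<le> \<phi>" and k2: "\<phi> < real k * t + t" using nu(2) by (simp_all add: field_simps)
  define s where "s = \<phi> - real k * t"
  have s: "0 \<le> s" "s \<le> t" using k1 k2 unfolding s_def by linarith+
  have "cis (real k * t) * cis s = cis \<phi>" unfolding s_def by (simp add: cis_mult)
  moreover have "nu^k = cis (real k * t)" unfolding nu(1) by (rule Complex.DeMoivre)
  ultimately have "nu^k - w = cis (real k * t) * (1 - cis s)"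
    unfolding wphi by (simp add: right_diff_distrib)
  then have "cmod (nu^k - w) = cmod (1 - cis s)" by (simp add: norm_mult)
  also have "\<dots> \<le> cmod (1 - cis t)" using cis_close s nu by blast
  also have "\<dots> = cmod (nu - 1)" using nu(1) by (simp add: norm_minus_commute)
  finally show ?thesis using e by (intro exI[of _ k]) simp
qed




lemma minimal_subset_exists:
  fixes T :: "'b::topological_space \<Rightarrow> 'b"
  assumes cK: "compact K" and K: "K \<noteq> {}" "closed K" "T ` K \<subseteq> K"
  obtains M where "M \<subseteq> K" "M \<noteq> {}" "closed M" "T ` M \<subseteq> M"
    "\<And>A. A \<subseteq> M \<Longrightarrow> A \<noteq> {} \<Longrightarrow> closed A \<Longrightarrow> T ` A \<subseteq> A \<Longrightarrow> A = M"
proof -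
  define \<A> where "\<A> = {A. A \<subseteq> K \<and> A \<noteq> {} \<and> closed A \<and> T ` A \<subseteq> A}"
  have KA: "K \<in> \<A>" using K unfolding \<A>_def by auto
  have "\<exists>Mc\<in>uminus ` \<A>. \<forall>X\<in>uminus ` \<A>. Mc \<subseteq> X \<longrightarrow> X = Mc"
  proof (rule subset_Zorn_nonempty)
    show "uminus ` \<A> \<noteq> {}" using KA by blast
  next
    fix \<C> assume Cne: "\<C> \<noteq> {}" and ch: "subset.chain (uminus ` \<A>) \<C>"
    define \<D> where "\<D> = uminus ` \<C>"
    have DA: "\<D> \<subseteq> \<A>"
    proof
      fix D assume "D \<in> \<D>"
      then obtain c where c: "c \<in> \<C>" "D = - c" unfolding \<D>_def by blast
      then have "c \<in> uminus ` \<A>" using ch unfolding subset_chain_def by blast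
      then show "D \<in> \<A>" using c by auto
    qed
    have Dch: "\<forall>X\<in>\<D>. \<forall>Y\<in>\<D>. X \<subseteq> Y \<or> Y \<subseteq> X"
    proof (intro ballI)
      fix X Y assume "X \<in> \<D>" "Y \<in> \<D>"
      then obtain x y where "x \<in> \<C>" "y \<in> \<C>" "X = -x" "Y = -y" unfolding \<D>_def by blast
      moreover have "x \<subseteq> y \<or> y \<subseteq> x" using ch \<open>x \<in> \<C>\<close> \<open>y \<in> \<C>\<close> unfolding subset_chain_def by blast
      ultimately show "X \<subseteq> Y \<or> Y \<subseteq> X" by blast
    qed
    have Dne: "\<D> \<noteq> {}" using Cne unfolding \<D>_def by blast
    have UC: "\<Union>\<C> = - \<Inter>\<D>" unfolding \<D>_def by auto
    have IK: "\<Inter>\<D> \<subseteq> K" using Dne DA unfolding \<A>_def by blast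
    have Icl: "closed (\<Inter>\<D>)" using DA unfolding \<A>_def by (intro closed_Inter) blast
    have IT: "T ` \<Inter>\<D> \<subseteq> \<Inter>\<D>"
    proof
      fix y assume "y \<in> T ` \<Inter>\<D>"
      then obtain x where x: "x \<in> \<Inter>\<D>" "y = T x" by blast
      show "y \<in> \<Inter>\<D>"
      proof
        fix D assume D: "D \<in> \<D>"
        then have "T ` D \<subseteq> D" using DA unfolding \<A>_def by blast
        then show "y \<in> D" using x D by blast
      qed
    qed
    have "K \<inter> \<Inter>\<D> \<noteq> {}"
    proof (rule compact_imp_fip[OF cK])
      show "closed D" if "D \<in> \<D>" for D using that DA unfolding \<A>_def by blast
    next
      fix F' assume F': "finite F'" "F' \<subseteq> \<D>"
      show "K \<inter> \<Inter>F' \<noteq> {}"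
      proof (cases "F' = {}")
        case True then show ?thesis using K by simp
      next
        case False
        have "\<forall>X\<in>F'. \<forall>Y\<in>F'. X \<subseteq> Y \<or> Y \<subseteq> X" using Dch F' by blast
        then obtain X where X: "X \<in> F'" "\<forall>Y\<in>F'. X \<subseteq> Y" using finite_chain_min[OF F'(1) False] by blast
        have "\<Inter>F' = X" using X by blast
        moreover have "X \<in> \<A>" using X F' DA by blast
        ultimately show ?thesis unfolding \<A>_def by auto
      qed
    qed
    then have "\<Inter>\<D> \<in> \<A>" using IK Icl IT unfolding \<A>_def by auto
    then show "\<Union>\<C> \<in> uminus ` \<A>" unfolding UC by blast
  qed
  then obtain M where M: "M \<in> \<A>" and Mm: "\<forall>X\<in>uminus ` \<A>. - M \<subseteq> X \<longrightarrow> X = - M" by blast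
  show ?thesis
  proof (rule that)
    show "M \<subseteq> K" "M \<noteq> {}" "closed M" "T ` M \<subseteq> M" using M unfolding \<A>_def by auto
  next
    fix A assume A: "A \<subseteq> M" "A \<noteq> {}" "closed A" "T ` A \<subseteq> A"
    then have "A \<in> \<A>" using M unfolding \<A>_def by auto
    moreover have "- M \<subseteq> - A" using A by blast
    ultimately have "- A = - M" using Mm by blast
    then show "A = M" by simp
  qed
qed




lemma skew_minimal:
  fixes B :: "'a::metric_space set" and lam :: complex
  assumes B: "compact B" "B \<noteq> {}" and gc: "continuous_on B g" and gB: "g ` B \<subseteq> B"
    and minB: "\<And>A. A \<subseteq> B \<Longrightarrow> A \<noteq> {} \<Longrightarrow> closed A \<Longrightarrow> g ` A \<subseteq> A \<Longrightarrow> A = B"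
    and lam: "cmod lam = 1" and noeig: "\<And>n. n \<ge> 1 \<Longrightarrow> \<not> eig B g (lam^n)"
    and K: "K \<subseteq> B \<times> sphere 0 1" "K \<noteq> {}" "closed K" "(\<lambda>p. (g (fst p), lam * snd p)) ` K \<subseteq> K"
  shows "K = B \<times> sphere 0 1"
proof -
  define T where "T p = (g (fst p), lam * snd p)" for p :: "'a \<times> complex"
  have TK: "T ` K \<subseteq> K" using K(4) unfolding T_def by simp
  have cBS: "compact (B \<times> sphere (0::complex) 1)" using B(1) by (intro compact_Times compact_sphere)
  have cK: "compact K"
  proof -
    have "compact (B \<times> sphere (0::complex) 1 \<inter> K)" using cBS K(3) by (rule compact_Int_closed)
    moreover have "B \<times> sphere (0::complex) 1 \<inter> K = K" using K(1) by blast
    ultimately show ?thesis by simp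
  qed
  obtain M where M: "M \<subseteq> K" "M \<noteq> {}" "closed M" "T ` M \<subseteq> M"
    and Mmin: "\<And>A. A \<subseteq> M \<Longrightarrow> A \<noteq> {} \<Longrightarrow> closed A \<Longrightarrow> T ` A \<subseteq> A \<Longrightarrow> A = M"
    using minimal_subset_exists[OF cK K(2,3) TK] by blast
  have MB: "M \<subseteq> B \<times> sphere 0 1" using M(1) K(1) by blast
  have cM: "compact M"
  proof -
    have "compact (B \<times> sphere (0::complex) 1 \<inter> M)" using cBS M(3) by (rule compact_Int_closed)
    moreover have "B \<times> sphere (0::complex) 1 \<inter> M = M" using MB by blast
    ultimately show ?thesis by simp
  qed
  have Mn: "cmod z = 1" "x \<in> B" if "(x,z) \<in> M" for x z using MB that by auto
  have MT: "(g x, lam * z) \<in> M" if "(x,z) \<in> M" for x z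
    using M(4) that unfolding T_def by force
  have fib: "\<exists>z. (x,z) \<in> M" if "x \<in> B" for x
  proof -
    have "fst ` M = B"
    proof (rule minB)
      show "fst ` M \<subseteq> B" using MB by auto
      show "fst ` M \<noteq> {}" using M(2) by simp
      show "closed (fst ` M)" using cM by (intro compact_imp_closed compact_continuous_image continuous_intros)
      show "g ` fst ` M \<subseteq> fst ` M"
      proof
        fix y assume "y \<in> g ` fst ` M"
        then obtain x z where "(x,z) \<in> M" "y = g x" by auto
        then show "y \<in> fst ` M" using MT by force
      qed
    qed
    then show ?thesis using that by force
  qed
  define rot where "rot \<mu> p = (fst p, \<mu> * snd p)" for \<mu> :: complex and p :: "'a \<times> complex"
  have rotT: "T (rot \<mu> p) = rot \<mu> (T p)" for \<mu> p unfolding T_def rot_def by (simp add: algebra_simps)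
  have R2: "M \<subseteq> rot \<mu> ` M" if "rot \<mu> ` M \<inter> M \<noteq> {}" for \<mu>
  proof -
    have cl: "closed (rot \<mu> ` M)" unfolding rot_def
      using cM by (intro compact_imp_closed compact_continuous_image continuous_intros)
    have inv: "T ` (rot \<mu> ` M) \<subseteq> rot \<mu> ` M"
      using M(4) rotT by (auto simp: image_subset_iff)
    have "M \<inter> rot \<mu> ` M = M"
    proof (rule Mmin)
      show "M \<inter> rot \<mu> ` M \<noteq> {}" using that by blast
      show "closed (M \<inter> rot \<mu> ` M)" using M(3) cl by blast
      show "T ` (M \<inter> rot \<mu> ` M) \<subseteq> M \<inter> rot \<mu> ` M" using M(4) inv by blast
    qed auto
    then show ?thesis by blast
  qed
  have rotrot: "rot \<mu> (rot \<nu> p) = rot (\<mu> * \<nu>) p" for \<mu> \<nu> p unfolding rot_def by (simp add: mult.assoc)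
  have rot1: "rot 1 p = p" for p unfolding rot_def by simp
  define H where "H = {\<mu> \<in> sphere 0 1. rot \<mu> ` M \<subseteq> M}"
  have H1: "z2 * cnj z1 \<in> H" if "(x,z1) \<in> M" "(x,z2) \<in> M" for x z1 z2
  proof -
    have n1: "cmod z1 = 1" and n2: "cmod z2 = 1" using Mn that by auto
    define \<mu> where "\<mu> = z2 * cnj z1"
    define \<nu> where "\<nu> = z1 * cnj z2"
    have mun: "\<mu> * \<nu> = 1" unfolding \<mu>_def \<nu>_def using unit_cnj[OF n1] unit_cnj[OF n2]
      by (metis (no_types, lifting) mult.assoc mult.commute mult.left_neutral)
    have "rot \<nu> (x,z2) = (x,z1)" unfolding rot_def \<nu>_def using unit_cnj[OF n2] by (simp add: mult.assoc)
    then have "M \<subseteq> rot \<nu> ` M" using that R2 by (metis IntI empty_iff image_eqI)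
    then have "rot \<mu> ` M \<subseteq> rot \<mu> ` rot \<nu> ` M" by blast
    also have "\<dots> = M" by (simp add: image_image rotrot mun rot1)
    finally have "rot \<mu> ` M \<subseteq> M" .
    moreover have "cmod \<mu> = 1" unfolding \<mu>_def using n1 n2 by (simp add: norm_mult)
    ultimately show ?thesis unfolding H_def \<mu>_def by simp
  qed
  have Hmult: "\<mu> * \<nu> \<in> H" if "\<mu> \<in> H" "\<nu> \<in> H" for \<mu> \<nu>
  proof -
    have "rot (\<mu> * \<nu>) ` M = rot \<mu> ` rot \<nu> ` M" by (simp add: image_image rotrot)
    also have "\<dots> \<subseteq> M" using that unfolding H_def by blast
    finally show ?thesis using that unfolding H_def by (simp add: norm_mult)
  qed
  have H1in: "1 \<in> H" unfolding H_def by (simp add: rot1)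
  have Hcnj: "cnj \<mu> \<in> H" if "\<mu> \<in> H" for \<mu>
  proof -
    obtain x z where xz: "(x,z) \<in> M" using M(2) by auto
    have "rot \<mu> (x,z) \<in> M" using that xz unfolding H_def by blast
    then have "(x, \<mu> * z) \<in> M" unfolding rot_def by simp
    from H1[OF this xz] have H': "z * cnj (\<mu> * z) \<in> H" .
    have u: "cnj z * z = 1" using unit_cnj[OF Mn(1)[OF xz]] .
    have "z * cnj (\<mu> * z) = cnj \<mu> * (cnj z * z)" by (simp add: algebra_simps)
    then have eq: "z * cnj (\<mu> * z) = cnj \<mu>" using u by simp
    show ?thesis using H' unfolding eq .
  qed
  have Hsph: "cmod \<mu> = 1" if "\<mu> \<in> H" for \<mu> using that unfolding H_def by simp
  have Hcl: "closed H"
  proof -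
    have eqH: "H = sphere 0 1 \<inter> (\<Inter>p\<in>M. (\<lambda>\<mu>. (fst p, \<mu> * snd p)) -` M)"
      unfolding H_def rot_def by (auto simp: image_subset_iff)
    have cv: "closed ((\<lambda>\<mu>. (fst p, \<mu> * snd p)) -` M)" for p
      using M(3) by (intro continuous_closed_vimage) (auto intro!: continuous_intros)
    have "closed (sphere (0::complex) 1 \<inter> (\<Inter>p\<in>M. (\<lambda>\<mu>. (fst p, \<mu> * snd p)) -` M))"
      by (intro closed_Int closed_sphere closed_INT ballI cv)
    then show ?thesis using eqH by simp
  qed
  have Hpow: "\<nu>^k \<in> H" if "\<nu> \<in> H" for \<nu> k
    by (induction k) (use H1in Hmult that in auto)
  show ?thesis
  proof (cases "finite H")
    case False
    have small: "\<exists>\<mu>\<in>H. \<mu> \<noteq> 1 \<and> cmod (\<mu> - 1) < e" if e: "e > 0" for e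
    proof -
      have cov: "sphere (0::complex) 1 \<subseteq> (\<Union>c\<in>sphere 0 1. ball c (e/2))" using e by force
      obtain C' where C': "C' \<subseteq> sphere 0 1" "finite C'" "sphere (0::complex) 1 \<subseteq> (\<Union>c\<in>C'. ball c (e/2))"
      proof (rule compactE_image[OF compact_sphere, of "sphere 0 1" "\<lambda>c. ball c (e/2)"])
        show "open (ball T (e/2))" for T :: complex by simp
        show "sphere (0::complex) 1 \<subseteq> (\<Union>c\<in>sphere 0 1. ball c (e/2))" by (rule cov)
      qed
      have "H = (\<Union>c\<in>C'. H \<inter> ball c (e/2))" using C'(3) unfolding H_def by blast
      have "\<exists>c\<in>C'. infinite (H \<inter> ball c (e/2))"
      proof (rule ccontr)
        assume "\<not> (\<exists>c\<in>C'. infinite (H \<inter> ball c (e/2)))"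
        then have "finite (\<Union>c\<in>C'. H \<inter> ball c (e/2))" using C'(2) by blast
        then show False using False \<open>H = (\<Union>c\<in>C'. H \<inter> ball c (e/2))\<close> by simp
      qed
      then obtain c where inf: "infinite (H \<inter> ball c (e/2))" by blast
      obtain h1 where h1: "h1 \<in> H \<inter> ball c (e/2)" using infinite_imp_nonempty[OF inf] by blast
      have "infinite (H \<inter> ball c (e/2) - {h1})" using inf by simp
      then obtain h2 where "h2 \<in> H \<inter> ball c (e/2) - {h1}" using infinite_imp_nonempty by blast
      then have h2: "h2 \<in> H \<inter> ball c (e/2)" "h2 \<noteq> h1" by auto
      have "dist h1 h2 \<le> dist c h1 + dist c h2" by (rule dist_triangle3)
      moreover have "dist c h1 < e/2" "dist c h2 < e/2" using h1 h2 by auto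
      ultimately have "dist h1 h2 < e" by linarith
      define \<mu> where "\<mu> = h1 * cnj h2"
      have "\<mu> \<in> H" unfolding \<mu>_def using h1 h2 Hmult Hcnj by blast
      have u2: "cnj h2 * h2 = 1" using unit_cnj Hsph h2 by blast
      have "\<mu> - 1 = (h1 - h2) * cnj h2" unfolding \<mu>_def using u2 by (simp add: algebra_simps)
      then have "cmod (\<mu> - 1) = cmod (h1 - h2)" using Hsph h2 by (simp add: norm_mult)
      then have "cmod (\<mu> - 1) < e" using \<open>dist h1 h2 < e\<close> by (simp add: dist_norm)
      moreover have "\<mu> \<noteq> 1"
      proof
        assume "\<mu> = 1"
        then have "h1 * (cnj h2 * h2) = h2" unfolding \<mu>_def by (metis mult.assoc mult_1)
        then show False using u2 h2 by simp
      qed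
      ultimately show ?thesis using \<open>\<mu> \<in> H\<close> by blast
    qed
    have dense: "\<exists>h\<in>H. dist h w < e" if w: "cmod w = 1" and e: "e > 0" for w e
    proof -
      obtain \<mu> where mu: "\<mu> \<in> H" "\<mu> \<noteq> 1" "cmod (\<mu> - 1) < e" using small e by blast
      have m0: "\<mu> \<noteq> 0" using Hsph[OF mu(1)] by auto
      have muc: "cis (Arg \<mu>) = \<mu>" using cis_Arg[OF m0] Hsph[OF mu(1)] by (simp add: sgn_div_norm)
      have A0: "Arg \<mu> \<noteq> 0"
      proof
        assume "Arg \<mu> = 0"
        then have "\<mu> = cis 0" using muc by simp
        then show False using mu(2) by simp
      qed
      obtain \<nu> t where nu: "\<nu> \<in> H" "\<nu> = cis t" "0 < t" "t \<le> pi" "cmod (\<nu> - 1) < e"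
      proof (cases "Arg \<mu> > 0")
        case True
        show ?thesis
        proof (rule that[of \<mu> "Arg \<mu>"])
          show "\<mu> = cis (Arg \<mu>)" using muc by simp
        qed (use mu True Arg_bounded[of \<mu>] in auto)
      next
        case False
        then have neg: "Arg \<mu> < 0" using A0 by linarith
        have "cnj (cis (Arg \<mu>)) = cis (- Arg \<mu>)" by (rule cis_cnj)
        then have "cnj \<mu> = cis (- Arg \<mu>)" unfolding muc .
        moreover have "cmod (cnj \<mu> - 1) = cmod (\<mu> - 1)"
          by (metis complex_cnj_diff complex_cnj_one complex_mod_cnj)
        ultimately show ?thesis using that[of "cnj \<mu>" "- Arg \<mu>"] mu(1,3) Hcnj[OF mu(1)] neg Arg_bounded[of \<mu>] by simp
      qed
      obtain k where "cmod (\<nu>^k - w) < e" using powers_dense[OF nu(2,3,4,5) w] by blast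
      then show ?thesis using Hpow[OF nu(1)] by (auto simp: dist_norm)
    qed
    have SH: "sphere 0 1 \<subseteq> H"
    proof
      fix w :: complex assume "w \<in> sphere 0 1"
      then have "cmod w = 1" by simp
      then have "w \<in> closure H" unfolding closure_approachable using dense by blast
      then show "w \<in> H" using Hcl by (simp add: closure_closed)
    qed
    have "B \<times> sphere 0 1 \<subseteq> M"
    proof
      fix p assume p: "p \<in> B \<times> sphere (0::complex) 1"
      obtain x w where xw: "p = (x,w)" "x \<in> B" "cmod w = 1" using p by auto
      obtain z where z: "(x,z) \<in> M" using fib xw(2) by blast
      have "cmod (w * cnj z) = 1" using xw(3) Mn(1)[OF z] by (simp add: norm_mult)
      then have "w * cnj z \<in> H" using SH by auto
      then have "rot (w * cnj z) (x,z) \<in> M" using z unfolding H_def by blast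
      moreover have "rot (w * cnj z) (x,z) = (x,w)" unfolding rot_def using unit_cnj[OF Mn(1)[OF z]]
        by (simp add: mult.assoc)
      ultimately show "p \<in> M" using xw by simp
    qed
    then show ?thesis using M(1) K(1) by blast
  next
    case True
    define N where "N = card H"
    define n :: nat where "n = fact N"
    have n1: "n \<ge> 1" unfolding n_def by simp
    have Hn: "\<mu>^n = 1" if mu: "\<mu> \<in> H" for \<mu>
    proof -
      have "(\<lambda>k. \<mu>^k) ` {0..N} \<subseteq> H" using Hpow mu by auto
      then have "card ((\<lambda>k. \<mu>^k) ` {0..N}) \<le> N" unfolding N_def using True card_mono by blast
      then have "\<not> inj_on (\<lambda>k. \<mu>^k) {0..N}" using card_image by fastforce
      then obtain i j where ij: "i \<in> {0..N}" "j \<in> {0..N}" "i \<noteq> j" "\<mu>^i = \<mu>^j" unfolding inj_on_def by blast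
      have m0: "\<mu> \<noteq> 0" using Hsph[OF mu] by auto
      have "\<exists>d. 1 \<le> d \<and> d \<le> N \<and> \<mu>^d = 1"
      proof (cases "i < j")
        case True
        have "\<mu>^j = \<mu>^i * \<mu>^(j-i)" using True by (simp add: power_add[symmetric])
        then have "\<mu>^(j-i) = 1" using ij(4) m0 by simp
        then show ?thesis using True ij by (intro exI[of _ "j-i"]) auto
      next
        case False
        then have ji: "j < i" using ij(3) by simp
        have "\<mu>^i = \<mu>^j * \<mu>^(i-j)" using ji by (simp add: power_add[symmetric])
        then have "\<mu>^(i-j) = 1" using ij(4) m0 by simp
        then show ?thesis using ji ij by (intro exI[of _ "i-j"]) auto
      qed
      then obtain d where d: "1 \<le> d" "d \<le> N" "\<mu>^d = 1" by blast
      have "d dvd n" unfolding n_def using d by (simp add: dvd_fact)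
      then obtain q where "n = d * q" by blast
      then show ?thesis using d(3) by (simp add: power_mult)
    qed
    define \<psi> where "\<psi> x = (SOME z. (x,z) \<in> M) ^ n" for x
    have psi_eq: "\<psi> x = z^n" if xz: "(x,z) \<in> M" for x z
    proof -
      define z0 where "z0 = (SOME z. (x,z) \<in> M)"
      have z0: "(x,z0) \<in> M" unfolding z0_def using xz by (rule someI)
      have "z * cnj z0 \<in> H" by (rule H1[OF z0 xz])
      then have "(z * cnj z0)^n = 1" by (rule Hn)
      then have "z^n * (cnj z0 * z0)^n = z0^n" 
        by (metis mult.assoc mult_1 power_mult_distrib)
      then have "z^n = z0^n" using unit_cnj[OF Mn(1)[OF z0]] by simp
      then show ?thesis unfolding \<psi>_def z0_def by simp
    qed
    have "eig B g (lam^n)" unfolding eig_def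
    proof (intro exI conjI)
      show "\<psi> ` B \<subseteq> sphere 0 1"
      proof
        fix y assume "y \<in> \<psi> ` B"
        then obtain x where x: "x \<in> B" "y = \<psi> x" by blast
        obtain z where z: "(x,z) \<in> M" using fib x(1) by blast
        show "y \<in> sphere 0 1" using x psi_eq[OF z] Mn(1)[OF z] by (simp add: norm_power)
      qed
      show "\<forall>x\<in>B. \<psi> (g x) = lam ^ n * \<psi> x"
      proof
        fix x assume "x \<in> B"
        then obtain z where z: "(x,z) \<in> M" using fib by blast
        show "\<psi> (g x) = lam ^ n * \<psi> x" using psi_eq[OF z] psi_eq[OF MT[OF z]] by (simp add: power_mult_distrib)
      qed
      show "continuous_on B \<psi>"
        unfolding continuous_on_closed_vimage[OF compact_imp_closed[OF B(1)]]
      proof (intro allI impI)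
        fix Z :: "complex set" assume Z: "closed Z"
        define S where "S = M \<inter> (\<lambda>p. (snd p)^n) -` Z"
        have "closed ((\<lambda>p::'a \<times> complex. (snd p)^n) -` Z)"
          using Z by (intro continuous_closed_vimage) (auto intro!: continuous_intros)
        then have "closed S" unfolding S_def using M(3) by blast
        have "compact (M \<inter> S)" using cM \<open>closed S\<close> by (rule compact_Int_closed)
        moreover have "M \<inter> S = S" unfolding S_def by blast
        ultimately have "compact S" by simp
        then have "closed (fst ` S)" by (intro compact_imp_closed compact_continuous_image continuous_intros)
        moreover have "\<psi> -` Z \<inter> B = fst ` S"
        proof
          show "\<psi> -` Z \<inter> B \<subseteq> fst ` S"
          proof
            fix x assume x: "x \<in> \<psi> -` Z \<inter> B"
            then obtain z where z: "(x,z) \<in> M" using fib by blast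
            then have "(x,z) \<in> S" unfolding S_def using x psi_eq[OF z] by simp
            then show "x \<in> fst ` S" by force
          qed
          show "fst ` S \<subseteq> \<psi> -` Z \<inter> B"
          proof
            fix x assume "x \<in> fst ` S"
            then obtain z where z: "(x,z) \<in> S" by force
            then have "(x,z) \<in> M" "z^n \<in> Z" unfolding S_def by auto
            then show "x \<in> \<psi> -` Z \<inter> B" using psi_eq Mn by auto
          qed
        qed
        ultimately show "closed (\<psi> -` Z \<inter> B)" by simp
      qed
    qed
    with noeig n1 show ?thesis by blast
  qed
qed




lemma circle_interior_param:
  assumes "is_circle C" "p \<in> C"
  obtains c s0 where "simple_path c" "pathfinish c = pathstart c" "path_image c = C"
    "0 < s0" "s0 < 1" "c s0 = p"
proof -
  obtain c where c: "simple_path c" "pathfinish c = pathstart c" "path_image c = C"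
    using assms(1) unfolding is_circle_def by blast
  obtain s where s: "s \<in> {0..1}" "c s = p" using assms(2) c(3) unfolding path_image_def by blast
  show ?thesis
  proof (cases "0 < s \<and> s < 1")
    case True
    then show ?thesis using that c s by blast
  next
    case False
    then have "s = 0 \<or> s = 1" using s(1) by auto
    then have p0: "c 1 = p" using s(2) c(2) unfolding pathfinish_def pathstart_def by auto
    define c' where "c' = shiftpath (1/2) c"
    have "simple_path c'" unfolding c'_def by (rule simple_path_shiftpath) (use c in auto)
    moreover have "pathfinish c' = pathstart c'" unfolding c'_def by (rule closed_shiftpath) (use c in auto)
    moreover have "path_image c' = C" unfolding c'_def using path_image_shiftpath[of "1/2" c] c by auto
    moreover have "c' (1/2) = p" unfolding c'_def shiftpath_def using p0 by simp
    ultimately show ?thesis using that[of c' "1/2"] by simp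
  qed
qed

lemma arc_circle_dichotomy:
  fixes a :: "real \<Rightarrow> 'b::metric_space"
  assumes A: "finite A" "\<forall>g\<in>A. arc g" "a \<in> A"
    and pw: "\<forall>g\<in>A. \<forall>h\<in>A. g \<noteq> h \<longrightarrow> path_image g \<inter> path_image h \<subseteq>
             {pathstart g, pathfinish g} \<inter> {pathstart h, pathfinish h}"
    and C: "is_circle C" "C \<subseteq> (\<Union>g\<in>A. path_image g)"
    and t0: "0 < t0" "t0 < 1" "a t0 \<in> C"
  shows "path_image a \<subseteq> C"
proof -
  have arca: "arc a" using A by blast
  have inja: "inj_on a {0..1}" using arca by (rule arc_imp_inj_on)
  have conta: "continuous_on {0..1} a" using arca unfolding arc_def path_def by blast
  have Ccl: "closed C" using C(1) unfolding is_circle_def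
    using closed_path_image simple_path_imp_path by blast
  define ainv where "ainv = inv_into {0..1} a"
  have ainv1: "ainv (a x) = x" if "x \<in> {0..1}" for x unfolding ainv_def using inja that by simp
  have ainv2: "a (ainv y) = y" "ainv y \<in> {0..1}" if "y \<in> path_image a" for y
  proof -
    have y: "y \<in> a ` {0..1}" using that unfolding path_image_def .
    show "a (ainv y) = y" unfolding ainv_def using y by (rule f_inv_into_f)
    show "ainv y \<in> {0..1}" unfolding ainv_def using y by (rule inv_into_into)
  qed
  have containv: "continuous_on (path_image a) ainv"
    unfolding path_image_def by (rule continuous_on_inv[OF conta compact_Icc]) (use ainv1 in auto)
  define S where "S = {t \<in> {0<..<1}. a t \<in> C}"
  have Sopen: "open S" unfolding open_contains_ball
  proof
    fix t assume tS: "t \<in> S"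
    then have t: "0 < t" "t < 1" "a t \<in> C" unfolding S_def by auto
    define p where "p = a t"
    define D where "D = (\<Union>b\<in>A-{a}. path_image b)"
    have pD: "p \<notin> D"
    proof
      assume "p \<in> D"
      then obtain b where b: "b \<in> A" "b \<noteq> a" "p \<in> path_image b" unfolding D_def by blast
      have "p \<in> path_image a" unfolding p_def path_image_def using t by auto
      then have "p \<in> {pathstart a, pathfinish a}" using pw b A(3) by blast
      then have "a t = a 0 \<or> a t = a 1" unfolding p_def pathstart_def pathfinish_def by auto
      moreover have "t \<in> {0..1}" using t by auto
      ultimately have "t = 0 \<or> t = 1" using inj_onD[OF inja] by force
      then show False using t by auto
    qed
    have "closed D" unfolding D_def using A
      by (intro closed_UN) (auto intro: closed_path_image arc_imp_path)
    then have "open (- D)" by (simp add: open_Compl)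
    then obtain \<epsilon> where \<epsilon>: "\<epsilon> > 0" "ball p \<epsilon> \<subseteq> - D"
      using pD unfolding open_contains_ball by blast
    obtain c s0 where c: "simple_path c" "pathfinish c = pathstart c" "path_image c = C"
      "0 < s0" "s0 < 1" "c s0 = p"
      using circle_interior_param[OF C(1), of p] t(3) unfolding p_def by blast
    have contc: "continuous_on {0..1} c" using c(1) unfolding simple_path_def path_def by blast
    have lf: "loop_free c" using c(1) unfolding simple_path_def by blast
    have "s0 \<in> {0..1}" using c(4,5) by auto
    obtain \<delta> where \<delta>: "\<delta> > 0" "\<forall>x'\<in>{0..1}. dist x' s0 < \<delta> \<longrightarrow> dist (c x') (c s0) < \<epsilon>"
      using contc \<epsilon>(1) \<open>s0 \<in> {0..1}\<close> unfolding continuous_on_iff by blast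
    define d where "d = min (\<delta>/2) (min (s0/2) ((1-s0)/2))"
    have e1: "d \<le> \<delta>/2" unfolding d_def by (rule min.cobounded1)
    have e2: "d \<le> min (s0/2) ((1-s0)/2)" unfolding d_def by (rule min.cobounded2)
    have e3: "min (s0/2) ((1-s0)/2) \<le> s0/2" by (rule min.cobounded1)
    have e4: "min (s0/2) ((1-s0)/2) \<le> (1-s0)/2" by (rule min.cobounded2)
    have d0: "d > 0" unfolding d_def using \<delta>(1) c(4,5) by auto
    have s0: "0 < s0" "s0 < 1" using c(4,5) by auto
    have da: "d < \<delta>" using e1 d0 by linarith
    have db: "d < s0" using e2 e3 d0 by linarith
    have "d \<le> (1-s0)/2" using e2 e4 by (rule order.trans)
    also have "\<dots> < 1 - s0" using s0 by simp
    finally have dc: "d < 1 - s0" .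
    note d = d0 da db dc
    define u where "u = s0 - d"
    define v where "v = s0 + d"
    have uv: "0 < u" "u < s0" "s0 < v" "v < 1" unfolding u_def v_def using d by auto
    have cJ: "c s \<in> path_image a" if s: "s \<in> {u..v}" for s
    proof -
      have s01: "s \<in> {0..1}" using s uv by auto
      have "s0 - d \<le> s" "s \<le> s0 + d" using s unfolding u_def v_def by auto
      then have "\<bar>s - s0\<bar> < \<delta>" using d by (simp add: abs_le_iff)
      then have "dist s s0 < \<delta>" unfolding dist_real_def .
      then have "dist (c s) p < \<epsilon>" using \<delta>(2) s01 c(6) by blast
      then have "c s \<notin> D" using \<epsilon>(2) by (auto simp: dist_commute)
      moreover have "c s \<in> C" using c(3) s01 unfolding path_image_def by blast
      then obtain b where "b \<in> A" "c s \<in> path_image b" using C(2) by blast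
      ultimately show ?thesis unfolding D_def by blast
    qed
    define k where "k s = ainv (c s)" for s
    have contk: "continuous_on {u..v} k"
    proof -
      have "continuous_on {u..v} c" by (rule continuous_on_subset[OF contc]) (use uv in auto)
      moreover have "continuous_on (c ` {u..v}) ainv" by (rule continuous_on_subset[OF containv]) (use cJ in auto)
      ultimately show ?thesis unfolding k_def using continuous_on_compose[of "{u..v}" c ainv] by (simp add: o_def)
    qed
    have injk: "inj_on k {u..v}"
    proof (rule inj_onI)
      fix x y assume x: "x \<in> {u..v}" and y: "y \<in> {u..v}" and "k x = k y"
      then have "a (ainv (c x)) = a (ainv (c y))" unfolding k_def by simp
      then have "c x = c y" using ainv2(1)[OF cJ[OF x]] ainv2(1)[OF cJ[OF y]] by simp
      moreover have "x \<in> {0..1}" "y \<in> {0..1}" "x \<noteq> 0" "y \<noteq> 0" "x \<noteq> 1" "y \<noteq> 1" using x y uv by auto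
      ultimately show "x = y" using lf unfolding loop_free_def by blast
    qed
    have uvseg: "closed_segment u v = {u..v}" using uv by (simp add: closed_segment_eq_real_ivl)
    have img: "k ` {u..v} = closed_segment (k u) (k v)"
      using continuous_injective_image_segment_1[of u v k] contk injk unfolding uvseg by simp
    have ks0: "k s0 = t" unfolding k_def c(6) p_def using ainv1 t by simp
    have s0J: "s0 \<in> {u..v}" using uv by simp
    have "u \<in> {u..v}" "v \<in> {u..v}" using uv by auto
    have "t \<noteq> k u"
    proof
      assume "t = k u"
      then have "s0 = u" using inj_onD[OF injk, of s0 u] ks0 s0J \<open>u \<in> {u..v}\<close> by simp
      then show False using uv by simp
    qed
    moreover have "t \<noteq> k v"
    proof
      assume "t = k v"
      then have "s0 = v" using inj_onD[OF injk, of s0 v] ks0 s0J \<open>v \<in> {u..v}\<close> by simp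
      then show False using uv by simp
    qed
    moreover have "t \<in> closed_segment (k u) (k v)" using img ks0 s0J by blast
    ultimately have "t \<in> open_segment (k u) (k v)" unfolding open_segment_def by blast
    moreover have "open (open_segment (k u) (k v))" by (simp add: open_segment_eq_real_ivl)
    ultimately have "\<exists>\<eta>>0. ball t \<eta> \<subseteq> open_segment (k u) (k v)"
      unfolding open_contains_ball by blast
    then obtain \<eta> where \<eta>: "\<eta> > 0" "ball t \<eta> \<subseteq> open_segment (k u) (k v)" by blast
    define \<eta>' where "\<eta>' = min \<eta> (min t (1-t))"
    have "\<eta>' > 0" unfolding \<eta>'_def using \<eta> t by auto
    moreover have "ball t \<eta>' \<subseteq> S"
    proof
      fix x assume x: "x \<in> ball t \<eta>'"
      then have "x \<in> ball t \<eta>" unfolding \<eta>'_def by auto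
      then have "x \<in> k ` {u..v}" using \<eta>(2) img unfolding open_segment_def by blast
      then obtain s where s: "s \<in> {u..v}" "x = k s" by blast
      have "a x = c s" unfolding s(2) k_def using ainv2(1)[OF cJ[OF s(1)]] .
      moreover have "c s \<in> C" using c(3) s uv unfolding path_image_def by auto
      moreover have "dist t x < min t (1-t)" using x unfolding \<eta>'_def by auto
      then have "0 < x" "x < 1" unfolding dist_real_def by (simp_all add: abs_less_iff)
      ultimately show "x \<in> S" unfolding S_def by auto
    qed
    ultimately show "\<exists>e>0. ball t e \<subseteq> S" by blast
  qed
  have Scl: "closedin (top_of_set {0<..<1}) S"
  proof -
    have "continuous_on {0<..<1} a" by (rule continuous_on_subset[OF conta]) auto
    then have "closedin (top_of_set {0<..<1}) ({0<..<1} \<inter> a -` C)" using Ccl by (rule continuous_closedin_preimage)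
    moreover have "{0<..<1} \<inter> a -` C = S" unfolding S_def by auto
    ultimately show ?thesis by simp
  qed
  have SS: "S = {0<..<1} \<inter> S" unfolding S_def by auto
  have Sop: "openin (top_of_set {0<..<1::real}) S"
    unfolding openin_open using Sopen SS by blast
  have "S \<noteq> {}" using t0 unfolding S_def by auto
  have cc: "\<forall>T. openin (top_of_set {0<..<1::real}) T \<and> closedin (top_of_set {0<..<1::real}) T \<longrightarrow> T = {} \<or> T = {0<..<1}"
    using connected_Ioo[of "0::real" 1] unfolding connected_clopen .
  have SI: "S = {0<..<1}" using cc Sop Scl \<open>S \<noteq> {}\<close> by blast
  have clo: "closed ({0..1} \<inter> a -` C)" by (rule continuous_closed_preimage[OF conta closed_atLeastAtMost Ccl])
  have sub: "{0<..<1} \<subseteq> {0..1} \<inter> a -` C"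
  proof
    fix x :: real assume x: "x \<in> {0<..<1}"
    then have "x \<in> S" using SI by simp
    then have "a x \<in> C" unfolding S_def by simp
    then show "x \<in> {0..1} \<inter> a -` C" using x by simp
  qed
  have "closure {0<..<1::real} \<subseteq> {0..1} \<inter> a -` C" by (rule closure_minimal[OF sub clo])
  moreover have "closure {0<..<1::real} = {0..1}" by (rule closure_greaterThanLessThan) simp
  ultimately have "{0..1::real} \<subseteq> a -` C" by blast
  then show ?thesis unfolding path_image_def by blast
qed




lemma graph_retraction:
  fixes \<Gamma> C :: "'b::metric_space set"
  assumes G: "is_graph \<Gamma>" and C: "is_circle C" "C \<subseteq> \<Gamma>"
  obtains r where "continuous_on \<Gamma> r" "r ` \<Gamma> \<subseteq> C" "\<forall>y\<in>C. r y = y"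
proof -
  obtain A :: "(real \<Rightarrow> 'b) set" where A: "finite A" "\<forall>g\<in>A. arc g" and GA: "\<Gamma> = (\<Union>g\<in>A. path_image g)"
    and pw: "\<forall>g\<in>A. \<forall>h\<in>A. g \<noteq> h \<longrightarrow> path_image g \<inter> path_image h \<subseteq>
             {pathstart g, pathfinish g} \<inter> {pathstart h, pathfinish h}"
    using G unfolding is_graph_def by blast
  obtain c where c: "simple_path c" "pathfinish c = pathstart c" "path_image c = C"
    using C(1) unfolding is_circle_def by blast
  have "c 0 \<in> C" using c(3) unfolding path_image_def by auto
  define c0 where "c0 = c 0"
  have c0: "c0 \<in> C" using \<open>c 0 \<in> C\<close> c0_def by simp
  have pcC: "path_connected C" using c(1,3) path_connected_path_image simple_path_imp_path by blast
  define vv where "vv v = (if v \<in> C then v else c0)" for v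
  have vvC: "vv v \<in> C" for v unfolding vv_def using c0 by auto
  define \<gamma> where "\<gamma> a = (SOME p. path p \<and> path_image p \<subseteq> C \<and> pathstart p = vv (a 0) \<and> pathfinish p = vv (a 1))"
    for a :: "real \<Rightarrow> 'b"
  have \<gamma>: "path (\<gamma> a) \<and> path_image (\<gamma> a) \<subseteq> C \<and> pathstart (\<gamma> a) = vv (a 0) \<and> pathfinish (\<gamma> a) = vv (a 1)" for a
  proof -
    have "\<exists>p. path p \<and> path_image p \<subseteq> C \<and> pathstart p = vv (a 0) \<and> pathfinish p = vv (a 1)"
      using pcC vvC unfolding path_connected_def by blast
    then show ?thesis unfolding \<gamma>_def by (rule someI_ex)
  qed
  have \<gamma>0: "\<gamma> a 0 = vv (a 0)" and \<gamma>1: "\<gamma> a 1 = vv (a 1)" for a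
    using \<gamma>[of a] unfolding pathstart_def pathfinish_def by auto
  have \<gamma>C: "\<gamma> a s \<in> C" if "s \<in> {0..1}" for a s
    using \<gamma>[of a] that unfolding path_image_def by blast
  define ainv where "ainv a = inv_into {0..1} a" for a :: "real \<Rightarrow> 'b"
  have ainv1: "ainv a (a x) = x" if "a \<in> A" "x \<in> {0..1}" for a x
    unfolding ainv_def using arc_imp_inj_on[of a] A that by simp
  have ainv2: "ainv a y \<in> {0..1}" if "y \<in> path_image a" for a y
    using that unfolding ainv_def path_image_def by (rule inv_into_into)
  define sel where "sel y = (SOME a. a \<in> A \<and> y \<in> path_image a)" for y
  define r where "r y = (if y \<in> C then y else \<gamma> (sel y) (ainv (sel y) y))" for y
  define h where "h a y = (if path_image a \<subseteq> C then y else \<gamma> a (ainv a y))" for a y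
  have endp: "y = a 0 \<or> y = a 1" if a: "a \<in> A" "\<not> path_image a \<subseteq> C" and y: "y \<in> path_image a" "y \<in> C" for a y
  proof -
    obtain t where t: "t \<in> {0..1}" "y = a t" using y(1) unfolding path_image_def by blast
    have "\<not> (0 < t \<and> t < 1)"
    proof
      assume "0 < t \<and> t < 1"
      then have "path_image a \<subseteq> C"
        using arc_circle_dichotomy[OF A a(1) pw C(1) _, of t] C(2) GA y(2) t(2) by blast
      then show False using a(2) by blast
    qed
    then have "t = 0 \<or> t = 1" using t(1) by auto
    then show ?thesis using t(2) by auto
  qed
  have hend: "\<gamma> a (ainv a y) = vv y" if a: "a \<in> A" and y: "y = a 0 \<or> y = a 1" for a y
  proof -
    have "(0::real) \<in> {0..1}" "(1::real) \<in> {0..1}" by auto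
    then show ?thesis using y ainv1[OF a] \<gamma>0 \<gamma>1 by auto
  qed
  have rh: "r y = h a y" if a: "a \<in> A" and y: "y \<in> path_image a" for a y
  proof (cases "path_image a \<subseteq> C")
    case True
    then show ?thesis unfolding r_def h_def using y by auto
  next
    case False
    show ?thesis
    proof (cases "y \<in> C")
      case True
      then have "y = a 0 \<or> y = a 1" using endp[OF a False y] by blast
      then have "\<gamma> a (ainv a y) = y" using hend[OF a] True unfolding vv_def by simp
      then show ?thesis unfolding r_def h_def using True False by simp
    next
      case yC: False
      have "\<exists>b. b \<in> A \<and> y \<in> path_image b" using a y by blast
      then have sel: "sel y \<in> A" "y \<in> path_image (sel y)" unfolding sel_def by (metis (mono_tags, lifting) someI_ex)+
      show ?thesis
      proof (cases "sel y = a")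
        case True
        then show ?thesis unfolding r_def h_def using yC False by simp
      next
        case ne: False
        have "y \<in> {pathstart a, pathfinish a} \<inter> {pathstart (sel y), pathfinish (sel y)}"
          using pw a sel ne y by blast
        then have ya: "y = a 0 \<or> y = a 1" and ys: "y = sel y 0 \<or> y = sel y 1"
          unfolding pathstart_def pathfinish_def by auto
        have "\<gamma> a (ainv a y) = vv y" using hend[OF a ya] .
        moreover have "\<gamma> (sel y) (ainv (sel y) y) = vv y" using hend[OF sel(1) ys] .
        ultimately show ?thesis unfolding r_def h_def using yC False by simp
      qed
    qed
  qed
  have hcont: "continuous_on (path_image a) (h a)" if a: "a \<in> A" for a
  proof (cases "path_image a \<subseteq> C")
    case True
    then show ?thesis unfolding h_def by (simp add: continuous_on_id)
  next
    case False
    have conta: "continuous_on {0..1} a" using A a unfolding arc_def path_def by blast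
    have ci: "continuous_on (path_image a) (ainv a)"
      unfolding path_image_def by (rule continuous_on_inv[OF conta compact_Icc]) (use ainv1[OF a] in auto)
    have cg: "continuous_on {0..1} (\<gamma> a)" using \<gamma>[of a] unfolding path_def by blast
    have "continuous_on (path_image a) (\<lambda>y. \<gamma> a (ainv a y))"
      by (rule continuous_on_compose2[OF cg ci]) (use ainv2 in auto)
    then show ?thesis unfolding h_def using False by simp
  qed
  show ?thesis
  proof (rule that)
    show "continuous_on \<Gamma> r" unfolding GA
    proof (rule continuous_on_closed_Union[OF A(1)])
      fix a assume a: "a \<in> A"
      show "closed (path_image a)" using A a by (intro closed_path_image arc_imp_path) blast
      show "continuous_on (path_image a) r"
        using hcont[OF a] by (rule continuous_on_eq) (use rh[OF a] in auto)
    qed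
    show "r ` \<Gamma> \<subseteq> C"
    proof
      fix z assume "z \<in> r ` \<Gamma>"
      then obtain y where y: "y \<in> \<Gamma>" "z = r y" by blast
      show "z \<in> C"
      proof (cases "y \<in> C")
        case True then show ?thesis using y unfolding r_def by simp
      next
        case False
        have "\<exists>b. b \<in> A \<and> y \<in> path_image b" using y GA by blast
        then have "y \<in> path_image (sel y)" unfolding sel_def by (metis (mono_tags, lifting) someI_ex)
        then have "ainv (sel y) y \<in> {0..1}" by (rule ainv2)
        then show ?thesis using y False \<gamma>C unfolding r_def by simp
      qed
    qed
    show "\<forall>y\<in>C. r y = y" unfolding r_def by simp
  qed
qed




theorem corollary1:
  fixes B :: "'a::metric_space set" and \<Gamma> C :: "'b::metric_space set"
  assumes "compact B" and "B \<noteq> {}"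
    and "\<exists>g. continuous_on B g \<and> minimal_map B g"
    and "is_graph \<Gamma>" and "is_circle C" and "C \<subseteq> \<Gamma>"
  shows "\<exists>F f. continuous_on (B \<times> \<Gamma>) F \<and> F ` (B \<times> \<Gamma>) \<subseteq> B \<times> \<Gamma> \<and>
           continuous_on B f \<and> f ` B \<subseteq> B \<and>
           (\<forall>x\<in>B \<times> \<Gamma>. fst (F x) = f (fst x)) \<and>
           minimal_set F (B \<times> C)"
proof -
  obtain g where gc: "continuous_on B g" and gm: "minimal_map B g" using assms(3) by blast
  have gB: "g ` B \<subseteq> B" using gm unfolding minimal_map_def by blast
  have clB: "closed B" using assms(1) by (rule compact_imp_closed)
  have minB: "A = B" if "A \<subseteq> B" "A \<noteq> {}" "closed A" "g ` A \<subseteq> A" for A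
  proof -
    have "closedin (top_of_set B) A" using that(1,3) by (rule closed_subset)
    then show ?thesis using gm that unfolding minimal_map_def by blast
  qed
  have gsurj: "g ` B = B"
  proof (rule minB)
    show "g ` B \<subseteq> B" by (rule gB)
    show "g ` B \<noteq> {}" using assms(2) by simp
    show "closed (g ` B)" using compact_continuous_image[OF gc assms(1)] by (rule compact_imp_closed)
    show "g ` g ` B \<subseteq> g ` B" using gB by blast
  qed
  have "countable {\<beta>. eig B g \<beta>}" by (rule eig_countable[OF assms(1,2) gsurj])
  then obtain lam where lam: "lam \<in> sphere (0::complex) 1" "\<forall>n\<ge>1. lam^n \<notin> {\<beta>. eig B g \<beta>}"
    using good_lambda by blast
  have lam1: "cmod lam = 1" using lam(1) by simp
  obtain c where c: "simple_path c" "pathfinish c = pathstart c" "path_image c = C"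
    using assms(5) unfolding is_circle_def by blast
  have "C homeomorphic sphere (0::complex) 1"
    using homeomorphic_simple_path_image_circle[OF c(1,2), of 1 0] c(3) by simp
  then obtain \<phi> \<phi>i where hom: "homeomorphism C (sphere (0::complex) 1) \<phi> \<phi>i"
    unfolding homeomorphic_def by blast
  have \<phi>: "\<phi> ` C = sphere 0 1" "\<phi>i ` sphere 0 1 = C" "continuous_on C \<phi>" "continuous_on (sphere 0 1) \<phi>i"
    "\<And>y. y \<in> C \<Longrightarrow> \<phi>i (\<phi> y) = y" "\<And>w. w \<in> sphere 0 1 \<Longrightarrow> \<phi> (\<phi>i w) = w"
    using hom unfolding homeomorphism_def by auto
  obtain r where r: "continuous_on \<Gamma> r" "r ` \<Gamma> \<subseteq> C" "\<forall>y\<in>C. r y = y"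
    using graph_retraction[OF assms(4,5,6)] by blast
  define G where "G y = \<phi>i (lam * \<phi> (r y))" for y
  have GC: "G y \<in> C" if "y \<in> \<Gamma>" for y
  proof -
    have "r y \<in> C" using r(2) that by blast
    then have "\<phi> (r y) \<in> sphere 0 1" using \<phi>(1) by blast
    then have "lam * \<phi> (r y) \<in> sphere 0 1" using lam1 by (simp add: norm_mult)
    then show ?thesis unfolding G_def using \<phi>(2) by blast
  qed
  have Gcont: "continuous_on \<Gamma> G"
  proof -
    have c1: "continuous_on \<Gamma> (\<lambda>y. \<phi> (r y))" by (rule continuous_on_compose2[OF \<phi>(3) r(1) r(2)])
    have c2: "continuous_on \<Gamma> (\<lambda>y. lam * \<phi> (r y))" using c1 by (intro continuous_intros)
    have "(\<lambda>y. lam * \<phi> (r y)) ` \<Gamma> \<subseteq> sphere 0 1"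
    proof
      fix w assume "w \<in> (\<lambda>y. lam * \<phi> (r y)) ` \<Gamma>"
      then obtain y where y: "y \<in> \<Gamma>" "w = lam * \<phi> (r y)" by blast
      have "r y \<in> C" using r(2) y(1) by blast
      then have "\<phi> (r y) \<in> sphere 0 1" using \<phi>(1) by blast
      then show "w \<in> sphere 0 1" using y(2) lam1 by (simp add: norm_mult)
    qed
    then show ?thesis unfolding G_def by (rule continuous_on_compose2[OF \<phi>(4) c2])
  qed
  define F where "F p = (g (fst p), G (snd p))" for p
  show ?thesis
  proof (intro exI conjI)
    show "continuous_on (B \<times> \<Gamma>) F" unfolding F_def
    proof (intro continuous_on_Pair)
      show "continuous_on (B \<times> \<Gamma>) (\<lambda>x. g (fst x))"
        by (rule continuous_on_compose2[OF gc continuous_on_fst[OF continuous_on_id]]) auto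
      show "continuous_on (B \<times> \<Gamma>) (\<lambda>x. G (snd x))"
        by (rule continuous_on_compose2[OF Gcont continuous_on_snd[OF continuous_on_id]]) auto
    qed
    show "F ` (B \<times> \<Gamma>) \<subseteq> B \<times> \<Gamma>" unfolding F_def using gB GC assms(6) by auto
    show "continuous_on B g" by (rule gc)
    show "g ` B \<subseteq> B" by (rule gB)
    show "\<forall>x\<in>B \<times> \<Gamma>. fst (F x) = g (fst x)" unfolding F_def by simp
    have FC: "F (x,y) = (g x, \<phi>i (lam * \<phi> y))" if "y \<in> C" for x y
      unfolding F_def G_def using r(3) that by simp
    have FBC: "F ` (B \<times> C) \<subseteq> B \<times> C" unfolding F_def using gB GC assms(6) by auto
    have cBC: "compact (B \<times> C)" using assms(1) c(1,3)
      by (metis compact_Times compact_simple_path_image)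
    show "minimal_set F (B \<times> C)" unfolding minimal_set_def minimal_map_def
    proof (intro conjI allI impI)
      show "B \<times> C \<noteq> {}" using assms(2) c(3) unfolding path_image_def by auto
      show "closed (B \<times> C)" using cBC by (rule compact_imp_closed)
      show "F ` (B \<times> C) \<subseteq> B \<times> C" by (rule FBC)
      show "F ` (B \<times> C) \<subseteq> B \<times> C" by (rule FBC)
      fix A assume A: "A \<subseteq> B \<times> C \<and> A \<noteq> {} \<and> closedin (top_of_set (B \<times> C)) A \<and> F ` A \<subseteq> A"
      have Acl: "closed A" using A closedin_closed_trans compact_imp_closed[OF cBC] by blast
      have cA: "compact A"
      proof -
        have "compact (B \<times> C \<inter> A)" using cBC Acl by (rule compact_Int_closed)
        moreover have "B \<times> C \<inter> A = A" using A by blast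
        ultimately show ?thesis by simp
      qed
      define \<Phi> where "\<Phi> p = (fst p, \<phi> (snd p))" for p :: "'a \<times> 'b"
      define K where "K = \<Phi> ` A"
      have cPhi: "continuous_on A \<Phi>"
      proof -
        have "continuous_on A (\<lambda>p. \<phi> (snd p))"
          by (rule continuous_on_compose2[OF \<phi>(3) continuous_on_snd[OF continuous_on_id]]) (use A in auto)
        then show ?thesis unfolding \<Phi>_def by (intro continuous_on_Pair continuous_on_fst continuous_on_id)
      qed
      have "K = B \<times> sphere 0 1"
      proof (rule skew_minimal[OF assms(1,2) gc gB minB lam1])
        show "\<not> eig B g (lam ^ n)" if "n \<ge> 1" for n using lam(2) that by simp
        show "K \<subseteq> B \<times> sphere 0 1"
        proof
          fix q assume "q \<in> K"
          then obtain x y where xy: "(x,y) \<in> A" "q = (x, \<phi> y)" unfolding K_def \<Phi>_def by auto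
          have "x \<in> B" "y \<in> C" using xy(1) A by auto
          then show "q \<in> B \<times> sphere 0 1" using xy(2) \<phi>(1) by blast
        qed
        show "K \<noteq> {}" unfolding K_def using A by simp
        show "closed K" unfolding K_def using compact_continuous_image[OF cPhi cA] by (rule compact_imp_closed)
        show "(\<lambda>p. (g (fst p), lam * snd p)) ` K \<subseteq> K"
        proof
          fix q assume "q \<in> (\<lambda>p. (g (fst p), lam * snd p)) ` K"
          then obtain x y where xy: "(x,y) \<in> A" "q = (g x, lam * \<phi> y)" unfolding K_def \<Phi>_def by auto
          have yC: "y \<in> C" using xy(1) A by auto
          have w: "lam * \<phi> y \<in> sphere 0 1" using \<phi>(1) yC lam1 by (auto simp: norm_mult)
          have "F (x,y) \<in> A" using A xy(1) by blast
          then have "(g x, \<phi>i (lam * \<phi> y)) \<in> A" using FC[OF yC] by simp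
          moreover have "\<Phi> (g x, \<phi>i (lam * \<phi> y)) = q" unfolding \<Phi>_def using xy(2) \<phi>(6)[OF w] by simp
          ultimately show "q \<in> K" unfolding K_def by force
        qed
      qed (auto)
      show "A = B \<times> C"
      proof
        show "A \<subseteq> B \<times> C" using A by blast
        show "B \<times> C \<subseteq> A"
        proof
          fix p assume p: "p \<in> B \<times> C"
          obtain x y where xy: "p = (x,y)" "x \<in> B" "y \<in> C" using p by auto
          have "(x, \<phi> y) \<in> K" using \<open>K = B \<times> sphere 0 1\<close> xy \<phi>(1) by auto
          then obtain x' y' where x'y': "(x',y') \<in> A" "(x, \<phi> y) = (x', \<phi> y')" unfolding K_def \<Phi>_def by auto
          have "y' \<in> C" using x'y'(1) A by auto
          then have "y' = y" using x'y'(2) \<phi>(5) xy(3) by (metis prod.inject)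
          then show "p \<in> A" using x'y' xy by simp
        qed
      qed
    qed
  qed
qed


end
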